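(* Let $a_0,\dots,a_N\in\mathbb{Z}$ and $r,d_{\min},d_{\max}\in\mathbb{N}$ with $r\le N$ and $d_{\min}\le d_{\max}$, and for $d\in\mathbb{N}$ put $M_d=(A\odot B_d\,|\,A\odot B_{d-1}\,|\,\cdots\,|\,A\odot B_0)\in\mathbb{Q}^{(N-r+1)\times(r+1)(d+1)}$. Consider the following procedure (Algorithm 3). Set $L=\emptyset$. For $d=d_{\min},\dots,d_{\max}$: compute a $\mathbb{Z}$-module basis $v_1,\dots,v_m\in\mathbb{Z}^{(r+1)(d+1)}$ of $\ker_{\mathbb{Z}}M_d$; if $d>d_{\min}$, replace $v_1,\dots,v_m$ by the nonzero rows of the Hermite normal form of the matrix with rows $v_1,\dots,v_m$, and let $\ell$ be such that the first $r+1$ components of $v_i$ are all zero if and only if $i>\ell$; if $d=d_{\min}$ let $\ell=m$; then append $r+1$ leading zeros to each vector in $L$, apply LLL to these padded vectors together with $v_1,\dots,v_\ell$, and let $L$ be the output basis; if the recurrence corresponding to the first vector of $L$ passes a given plausibility test, stop and return it. Then in every iteration $d$ that is executed, the vectors to which LLL is applied (the padded elements of the previous $L$ together with $v_1,\dots,v_\ell$) form a $\mathbb{Z}$-module basis of $\ker_{\mathbb{Z}}M_d$.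
   Context: Fix a $\mathbb{Q}$-basis $b_0,b_1,\dots$ of $\mathbb{Q}[x]$ such that for every $j$, $b_0,\dots,b_j$ span the polynomials of degree at most $j$. For given $a_0,\dots,a_N$ and $r\le N$, $A\in\mathbb{Q}^{(N-r+1)\times(r+1)}$ is the matrix with entry $a_{i+s}$ in row $i$, column $s$ ($0\le i\le N-r$, $0\le s\le r$), and $B_j\in\mathbb{Q}^{(N-r+1)\times(r+1)}$ is the matrix whose row $i$ has all entries equal to $b_j(i)$; $\odot$ is the entrywise product. Thus the first $r+1$ columns of $M_d$ are those of $A\odot B_d$. For a rational matrix $M$ with $m$ columns, $\ker_{\mathbb{Z}}M=\{x\in\mathbb{Z}^m:Mx=0\}$. An integer matrix is in Hermite normal form if it is in row echelon (staircase) form with positive pivot entries and each entry above a pivot is a nonnegative integer smaller than that pivot; every integer matrix has a unique Hermite normal form whose rows generate the same $\mathbb{Z}$-module as its rows. LLL is the Lenstra–Lenstra–Lovász reduction algorithm, which maps a $\mathbb{Z}$-module basis of a lattice to another $\mathbb{Z}$-module basis of the same lattice. *)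

theory Defs
  imports "HOL-Computational_Algebra.Polynomial"
begin

text \<open>Integer vectors are int lists; an integer matrix is a list of its rows.\<close>

definition adapted_poly_basis :: "(nat \<Rightarrow> rat poly) \<Rightarrow> bool" where
  "adapted_poly_basis b \<longleftrightarrow>
     (\<forall>n c. (\<Sum>i<n. smult (c i) (b i)) = 0 \<longrightarrow> (\<forall>i<n. c i = 0)) \<and>
     (\<forall>p. \<exists>n c. p = (\<Sum>i<n. smult (c i) (b i))) \<and>
     (\<forall>j. {p. degree p \<le> j} = {\<Sum>i\<le>j. smult (c i) (b i) | c. True})"

text \<open>Entry (i, col) of M_d = (A.B_d | A.B_{d-1} | ... | A.B_0): column col lies in block
  k = col div (r+1) (which is A.B_{d-k}) at position s = col mod (r+1); the entry is
  a_{i+s} * b_{d-k}(i).\<close>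
definition Mentry :: "(nat \<Rightarrow> int) \<Rightarrow> (nat \<Rightarrow> rat poly) \<Rightarrow> nat \<Rightarrow> nat \<Rightarrow> nat \<Rightarrow> nat \<Rightarrow> rat" where
  "Mentry a b r d i col =
     of_int (a (i + col mod (r+1))) * poly (b (d - col div (r+1))) (of_nat i)"

definition kerZ :: "(nat \<Rightarrow> int) \<Rightarrow> (nat \<Rightarrow> rat poly) \<Rightarrow> nat \<Rightarrow> nat \<Rightarrow> nat \<Rightarrow> int list set" where
  "kerZ a b N r d = {x. length x = (r+1)*(d+1) \<and>
     (\<forall>i\<le>N-r. (\<Sum>col<(r+1)*(d+1). Mentry a b r d i col * of_int (x ! col)) = 0)}"

definition lincomb :: "nat \<Rightarrow> (nat \<Rightarrow> int) \<Rightarrow> int list list \<Rightarrow> int list" where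
  "lincomb n c vs = map (\<lambda>j. \<Sum>i<length vs. c i * (vs ! i) ! j) [0..<n]"

definition zspan :: "nat \<Rightarrow> int list list \<Rightarrow> int list set" where
  "zspan n vs = {lincomb n c vs | c. True}"

definition zindep :: "nat \<Rightarrow> int list list \<Rightarrow> bool" where
  "zindep n vs \<longleftrightarrow> (\<forall>c. lincomb n c vs = replicate n 0 \<longrightarrow> (\<forall>i<length vs. c i = 0))"

definition is_zbasis :: "nat \<Rightarrow> int list list \<Rightarrow> int list set \<Rightarrow> bool" where
  "is_zbasis n vs K \<longleftrightarrow> (\<forall>v\<in>set vs. length v = n) \<and> zindep n vs \<and> zspan n vs = K"

definition nonzero_vec :: "int list \<Rightarrow> bool" where
  "nonzero_vec v \<longleftrightarrow> (\<exists>x\<in>set v. x \<noteq> 0)"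

definition pivot :: "int list \<Rightarrow> nat" where
  "pivot v = (LEAST j. j < length v \<and> v ! j \<noteq> 0)"

definition is_HNF :: "nat \<Rightarrow> int list list \<Rightarrow> bool" where
  "is_HNF n H \<longleftrightarrow>
     (\<forall>v\<in>set H. length v = n) \<and>
     (\<forall>i j. i < j \<and> j < length H \<and> nonzero_vec (H ! j) \<longrightarrow>
         nonzero_vec (H ! i) \<and> pivot (H ! i) < pivot (H ! j)) \<and>
     (\<forall>i<length H. nonzero_vec (H ! i) \<longrightarrow>
         H ! i ! pivot (H ! i) > 0 \<and>
         (\<forall>k<i. 0 \<le> H ! k ! pivot (H ! i) \<and> H ! k ! pivot (H ! i) < H ! i ! pivot (H ! i)))"

definition is_HNF_of :: "nat \<Rightarrow> int list list \<Rightarrow> int list list \<Rightarrow> bool" where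
  "is_HNF_of n W H \<longleftrightarrow> is_HNF n H \<and> length H = length W \<and> zspan n H = zspan n W"

definition lll_input :: "nat \<Rightarrow> nat \<Rightarrow> (nat \<Rightarrow> int list list) \<Rightarrow> (nat \<Rightarrow> int list list)
    \<Rightarrow> (nat \<Rightarrow> nat) \<Rightarrow> nat \<Rightarrow> int list list" where
  "lll_input r dmin L V ell d =
     (if d = dmin then [] else map (\<lambda>v. replicate (r+1) 0 @ v) (L (d-1))) @ take (ell d) (V d)"

end

theory Submission
  imports Defs
begin

lemma lincomb_length[simp]: "length (lincomb n c vs) = n"
  by (simp add: lincomb_def)

lemma lincomb_nth[simp]: "j < n \<Longrightarrow> lincomb n c vs ! j = (\<Sum>i<length vs. c i * vs!i!j)"
  by (simp add: lincomb_def)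

lemma zspan_iff: "x \<in> zspan n vs \<longleftrightarrow> length x = n \<and> (\<exists>c. \<forall>j<n. x!j = (\<Sum>i<length vs. c i * vs!i!j))"
proof
  assume "x \<in> zspan n vs"
  then obtain c where "x = lincomb n c vs" by (auto simp: zspan_def)
  then show "length x = n \<and> (\<exists>c. \<forall>j<n. x!j = (\<Sum>i<length vs. c i * vs!i!j))" by auto
next
  assume R: "length x = n \<and> (\<exists>c. \<forall>j<n. x!j = (\<Sum>i<length vs. c i * vs!i!j))"
  then obtain c where c: "\<forall>j<n. x!j = (\<Sum>i<length vs. c i * vs!i!j)" by blast
  have "x = lincomb n c vs" by (rule nth_equalityI) (use R c in auto)
  thus "x \<in> zspan n vs" by (auto simp: zspan_def)
qed

lemma lincomb_zero_iff: "lincomb n c vs = replicate n 0 \<longleftrightarrow> (\<forall>j<n. (\<Sum>i<length vs. c i * vs!i!j) = 0)"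
proof
  assume "lincomb n c vs = replicate n 0"
  then show "\<forall>j<n. (\<Sum>i<length vs. c i * vs!i!j) = 0"
    by (simp add: list_eq_iff_nth_eq)
next
  assume "\<forall>j<n. (\<Sum>i<length vs. c i * vs!i!j) = 0"
  then show "lincomb n c vs = replicate n 0" by (intro nth_equalityI) auto
qed

lemma in_zspan_member: assumes "v \<in> set vs" "length v = n" shows "v \<in> zspan n vs"
proof -
  obtain k where k: "k < length vs" "vs!k = v" using assms(1) by (auto simp: in_set_conv_nth)
  define c where "c = (\<lambda>i. if i = k then (1::int) else 0)"
  have "\<forall>j<n. v!j = (\<Sum>i<length vs. c i * vs!i!j)"
  proof (intro allI impI)
    fix j assume "j < n"
    have "(\<Sum>i<length vs. c i * vs!i!j) = (\<Sum>i<length vs. if i = k then vs!k!j else 0)"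
      by (rule sum.cong) (auto simp: c_def)
    also have "\<dots> = vs!k!j" using k(1) by simp
    finally show "v!j = (\<Sum>i<length vs. c i * vs!i!j)" using k(2) by simp
  qed
  then show ?thesis using assms(2) unfolding zspan_iff by blast
qed

lemma zero_in_zspan: assumes "length v = n" "\<forall>j<n. v!j = 0" shows "v \<in> zspan n vs"
  unfolding zspan_iff using assms by (intro conjI exI[of _ "\<lambda>_. 0"]) auto

lemma zspan_mono: assumes "\<forall>w\<in>set ws. w \<in> zspan n vs" shows "zspan n ws \<subseteq> zspan n vs"
proof
  fix x assume "x \<in> zspan n ws"
  then obtain c where lx: "length x = n" and xc: "\<forall>j<n. x!j = (\<Sum>k<length ws. c k * ws!k!j)"
    unfolding zspan_iff by blast
  have "\<forall>k. \<exists>e. k < length ws \<longrightarrow> (\<forall>j<n. ws!k!j = (\<Sum>i<length vs. e i * vs!i!j))"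
    using assms nth_mem unfolding zspan_iff by blast
  then have "\<exists>e. \<forall>k. k < length ws \<longrightarrow> (\<forall>j<n. ws!k!j = (\<Sum>i<length vs. e k i * vs!i!j))"
    by (rule choice)
  then obtain e where e0: "\<forall>k. k < length ws \<longrightarrow> (\<forall>j<n. ws!k!j = (\<Sum>i<length vs. e k i * vs!i!j))"
    by blast
  have e: "\<And>k j. k < length ws \<Longrightarrow> j < n \<Longrightarrow> ws!k!j = (\<Sum>i<length vs. e k i * vs!i!j)"
    using e0 by blast
  define c' where "c' = (\<lambda>i. \<Sum>k<length ws. c k * e k i)"
  have "\<forall>j<n. x!j = (\<Sum>i<length vs. c' i * vs!i!j)"
  proof (intro allI impI)
    fix j assume j: "j < n"
    have "x!j = (\<Sum>k<length ws. c k * (\<Sum>i<length vs. e k i * vs!i!j))"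
      using xc e j by simp
    also have "\<dots> = (\<Sum>k<length ws. \<Sum>i<length vs. c k * e k i * vs!i!j)"
      by (simp add: sum_distrib_left mult.assoc)
    also have "\<dots> = (\<Sum>i<length vs. \<Sum>k<length ws. c k * e k i * vs!i!j)"
      by (rule sum.swap)
    also have "\<dots> = (\<Sum>i<length vs. (\<Sum>k<length ws. c k * e k i) * vs!i!j)"
      by (simp add: sum_distrib_right)
    finally show "x!j = (\<Sum>i<length vs. c' i * vs!i!j)" by (simp add: c'_def)
  qed
  then show "x \<in> zspan n vs" using lx unfolding zspan_iff by blast
qed

lemma kerZ_closed:
  assumes "\<forall>w\<in>set ws. w \<in> kerZ a b N r d"
  shows "zspan ((r+1)*(d+1)) ws \<subseteq> kerZ a b N r d"
proof
  let ?n = "(r+1)*(d+1)"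
  fix x assume "x \<in> zspan ?n ws"
  then obtain c where lx: "length x = ?n" and xc: "\<forall>j<?n. x!j = (\<Sum>k<length ws. c k * ws!k!j)"
    unfolding zspan_iff by blast
  have "\<forall>i\<le>N-r. (\<Sum>col<?n. Mentry a b r d i col * of_int (x ! col)) = 0"
  proof (intro allI impI)
    fix i assume i: "i \<le> N - r"
    have "(\<Sum>col<?n. Mentry a b r d i col * of_int (x ! col))
        = (\<Sum>col<?n. \<Sum>k<length ws. of_int (c k) * (Mentry a b r d i col * of_int (ws!k!col)))"
      by (rule sum.cong) (auto simp: xc sum_distrib_left mult_ac)
    also have "\<dots> = (\<Sum>k<length ws. \<Sum>col<?n. of_int (c k) * (Mentry a b r d i col * of_int (ws!k!col)))"
      by (rule sum.swap)
    also have "\<dots> = (\<Sum>k<length ws. of_int (c k) * (\<Sum>col<?n. Mentry a b r d i col * of_int (ws!k!col)))"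
      by (simp only: sum_distrib_left)
    also have "\<dots> = 0"
      using assms nth_mem i by (intro sum.neutral) (auto simp: kerZ_def)
    finally show "(\<Sum>col<?n. Mentry a b r d i col * of_int (x ! col)) = 0" .
  qed
  then show "x \<in> kerZ a b N r d" using lx by (simp add: kerZ_def)
qed

lemma sum_lessThan_add: "(\<Sum>i<a+b. f i) = (\<Sum>i<a. f i) + (\<Sum>i<b. f (a+i))"
  for f :: "nat \<Rightarrow> 'a::comm_monoid_add"
  by (induction b) (auto simp: add_ac)

lemma pad_sum:
  assumes "length y = (r+1)*(d+1)"
  shows "(\<Sum>col<(r+1)*(Suc d+1). Mentry a b r (Suc d) i col * of_int ((replicate (r+1) 0 @ y)!col))
       = (\<Sum>c<(r+1)*(d+1). Mentry a b r d i c * of_int (y!c))"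
proof -
  have e: "(r+1)*(Suc d+1) = (r+1) + (r+1)*(d+1)" by simp
  have m: "Mentry a b r (Suc d) i (r+1+c) = Mentry a b r d i c" for c
  proof -
    have 1: "(r+1+c) mod (r+1) = c mod (r+1)" by (rule mod_add_self1)
    have 2: "(r+1+c) div (r+1) = c div (r+1) + 1" by (rule div_add_self1) simp
    show ?thesis unfolding Mentry_def 1 2 by simp
  qed
  have z: "(\<Sum>col<r+1. Mentry a b r (Suc d) i col * of_int ((replicate (r+1) 0 @ y)!col)) = 0"
    by (intro sum.neutral ballI) (simp add: nth_append del: replicate_Suc)
  have w: "(\<Sum>c<(r+1)*(d+1). Mentry a b r (Suc d) i (r+1+c) * of_int ((replicate (r+1) 0 @ y)!(r+1+c)))
       = (\<Sum>c<(r+1)*(d+1). Mentry a b r d i c * of_int (y!c))"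
    by (rule sum.cong) (simp_all only: m nth_append length_replicate, simp)
  have sp: "(\<Sum>col<(r+1)*(Suc d+1). Mentry a b r (Suc d) i col * of_int ((replicate (r+1) 0 @ y)!col))
      = (\<Sum>col<r+1. Mentry a b r (Suc d) i col * of_int ((replicate (r+1) 0 @ y)!col))
        + (\<Sum>c<(r+1)*(d+1). Mentry a b r (Suc d) i (r+1+c) * of_int ((replicate (r+1) 0 @ y)!(r+1+c)))"
    unfolding e by (rule sum_lessThan_add)
  show ?thesis unfolding sp z w by simp
qed

lemma pad_kerZ:
  assumes "length y = (r+1)*(d+1)"
  shows "replicate (r+1) 0 @ y \<in> kerZ a b N r (Suc d) \<longleftrightarrow> y \<in> kerZ a b N r d"
  using pad_sum[OF assms] assms by (simp add: kerZ_def)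

lemma pivot_props:
  assumes "j < length v" "v!j \<noteq> 0"
  shows "pivot v \<le> j \<and> pivot v < length v \<and> v!(pivot v) \<noteq> 0 \<and> (\<forall>j'<pivot v. v!j' = 0)"
proof -
  have ex: "j < length v \<and> v!j \<noteq> 0" using assms by simp
  have 1: "pivot v < length v \<and> v!(pivot v) \<noteq> 0" unfolding pivot_def by (rule LeastI[of "\<lambda>j. j < length v \<and> v!j \<noteq> 0", OF ex])
  have 2: "pivot v \<le> j" unfolding pivot_def by (rule Least_le[of "\<lambda>j. j < length v \<and> v!j \<noteq> 0", OF ex])
  have 3: "\<forall>j'<pivot v. v!j' = 0"
    using 1 not_less_Least unfolding pivot_def by fastforce
  show ?thesis using 1 2 3 by blast
qed

lemma echelon_indep:
  assumes A: "\<forall>i<length U. p i < length (U!i) \<and> U!i!(p i) \<noteq> 0 \<and> (\<forall>j<p i. U!i!j = 0)"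
    and B: "\<forall>i i'. i < i' \<and> i' < length U \<longrightarrow> p i < p i'"
    and C: "\<forall>i<length U. p i < q"
    and D: "\<forall>j<q. (\<Sum>k<length U. c k * U!k!j) = (0::int)"
  shows "\<forall>i<length U. c i = 0"
proof (intro allI impI)
  fix i show "i < length U \<Longrightarrow> c i = 0"
  proof (induction i rule: less_induct)
    case (less i)
    have "(\<Sum>k<length U. c k * U!k!(p i)) = (\<Sum>k<length U. if k = i then c i * U!i!(p i) else 0)"
    proof (rule sum.cong)
      fix k assume k: "k \<in> {..<length U}"
      show "c k * U!k!(p i) = (if k = i then c i * U!i!(p i) else 0)"
      proof (cases "k < i")
        case True then show ?thesis using less by auto
      next
        case False
        show ?thesis
        proof (cases "k = i")
          case False
          then have "i < k" using \<open>\<not> k < i\<close> by simp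
          then have "p i < p k" using B k by auto
          then show ?thesis using A k False by auto
        qed simp
      qed
    qed simp
    also have "\<dots> = c i * U!i!(p i)" using less.prems by simp
    finally have eq: "(\<Sum>k<length U. c k * U!k!(p i)) = c i * U!i!(p i)" .
    have "p i < q" using C less.prems by blast
    then have "(\<Sum>k<length U. c k * U!k!(p i)) = 0" using D by blast
    then have "c i * U!i!(p i) = 0" using eq by simp
    then show "c i = 0" using A less.prems by simp
  qed
qed

lemma filter_prefix:
  "(\<forall>i j. i < j \<and> j < length xs \<and> P (xs!j) \<longrightarrow> P (xs!i)) \<Longrightarrow> filter P xs = takeWhile P xs"
proof (induction xs)
  case (Cons x xs)
  show ?case
  proof (cases "P x")
    case True
    have "\<forall>i j. i < j \<and> j < length xs \<and> P (xs!j) \<longrightarrow> P (xs!i)"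
    proof (intro allI impI)
      fix i j assume "i < j \<and> j < length xs \<and> P (xs!j)"
      then show "P (xs!i)" using Cons.prems[rule_format, of "Suc i" "Suc j"] by simp
    qed
    then show ?thesis using Cons.IH True by simp
  next
    case False
    have "\<forall>y\<in>set xs. \<not> P y"
    proof
      fix y assume "y \<in> set xs"
      then obtain j where "j < length xs" "xs!j = y" by (auto simp: in_set_conv_nth)
      then show "\<not> P y" using Cons.prems[rule_format, of 0 "Suc j"] False by auto
    qed
    then show ?thesis using False by (simp add: filter_empty_conv)
  qed
qed simp


theorem mainTheorem2:
  fixes a :: "nat \<Rightarrow> int" and b :: "nat \<Rightarrow> rat poly"
    and N r dmin dmax dlast :: nat
    and W H V L :: "nat \<Rightarrow> int list list" and ell :: "nat \<Rightarrow> nat"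
    and test :: "int list \<Rightarrow> bool"
  assumes b_basis: "adapted_poly_basis b"
    and rN: "r \<le> N" and dd: "dmin \<le> dmax"
    and last: "dmin \<le> dlast" "dlast \<le> dmax"
    and not_stopped: "\<forall>d. dmin \<le> d \<and> d < dlast \<longrightarrow> \<not> test (hd (L d))"
    and kernel_basis: "\<forall>d. dmin \<le> d \<and> d \<le> dlast \<longrightarrow>
          is_zbasis ((r+1)*(d+1)) (W d) (kerZ a b N r d)"
    and first_iter: "V dmin = W dmin" "ell dmin = length (V dmin)"
    and later_iter: "\<forall>d. dmin < d \<and> d \<le> dlast \<longrightarrow>
          is_HNF_of ((r+1)*(d+1)) (W d) (H d) \<and>
          V d = filter nonzero_vec (H d) \<and>
          ell d \<le> length (V d) \<and>
          (\<forall>i<length (V d). (\<forall>j<r+1. V d ! i ! j = 0) \<longleftrightarrow> ell d \<le> i)"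
    and lll: "\<forall>d. dmin \<le> d \<and> d \<le> dlast \<longrightarrow>
          is_zbasis ((r+1)*(d+1)) (lll_input r dmin L V ell d)
                    (zspan ((r+1)*(d+1)) (lll_input r dmin L V ell d)) \<longrightarrow>
          is_zbasis ((r+1)*(d+1)) (L d) (zspan ((r+1)*(d+1)) (lll_input r dmin L V ell d))"
  shows "\<forall>d. dmin \<le> d \<and> d \<le> dlast \<longrightarrow>
          is_zbasis ((r+1)*(d+1)) (lll_input r dmin L V ell d) (kerZ a b N r d)"
  proof (intro allI impI)
  fix d assume dR: "dmin \<le> d \<and> d \<le> dlast"
  have "d \<le> dlast \<longrightarrow> is_zbasis ((r+1)*(d+1)) (lll_input r dmin L V ell d) (kerZ a b N r d)"
    using dR[THEN conjunct1]
  proof (induction d rule: nat_induct_at_least)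
    case base
    show ?case
    proof
      assume "dmin \<le> dlast"
      have "lll_input r dmin L V ell dmin = W dmin" using first_iter by (simp add: lll_input_def)
      then show "is_zbasis ((r+1)*(dmin+1)) (lll_input r dmin L V ell dmin) (kerZ a b N r dmin)"
        using kernel_basis last by simp
    qed
  next
    case (Suc d0)
    have d0m: "dmin \<le> d0" using Suc by simp
    show ?case
    proof
      assume sl: "Suc d0 \<le> dlast"
      have d0l: "d0 \<le> dlast" using sl by simp
      define n where "n = (r+1)*(Suc d0+1)"
      define n0 where "n0 = (r+1)*(d0+1)"
      have nn: "n = r+1+n0" by (simp add: n_def n0_def)
      define K where "K = kerZ a b N r (Suc d0)"
      define K0 where "K0 = kerZ a b N r d0"
      have IH: "is_zbasis n0 (lll_input r dmin L V ell d0) K0"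
        using Suc d0l unfolding n0_def K0_def by blast
      have Lb: "is_zbasis n0 (L d0) K0"
      proof -
        have "is_zbasis n0 (lll_input r dmin L V ell d0) (zspan n0 (lll_input r dmin L V ell d0))"
          using IH by (simp add: is_zbasis_def)
        then have "is_zbasis n0 (L d0) (zspan n0 (lll_input r dmin L V ell d0))"
          using lll[rule_format, of d0] d0m d0l unfolding n0_def by blast
        then show ?thesis using IH by (simp add: is_zbasis_def)
      qed
      define pad where "pad = (\<lambda>v::int list. replicate (r+1) 0 @ v)"
      define V' where "V' = V (Suc d0)"
      define H' where "H' = H (Suc d0)"
      define e where "e = ell (Suc d0)"
      define P where "P = map pad (L d0)"
      define V1 where "V1 = take e V'"
      have inp: "lll_input r dmin L V ell (Suc d0) = P @ V1"
        using Suc d0m by (simp add: lll_input_def P_def V1_def pad_def V'_def e_def)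
      have LI: "is_HNF_of n (W (Suc d0)) H'" and V'f: "V' = filter nonzero_vec H'" and el: "e \<le> length V'"
        and ez: "\<forall>i<length V'. (\<forall>j<r+1. V'!i!j = 0) \<longleftrightarrow> e \<le> i"
      proof -
        have dd0: "dmin < Suc d0 \<and> Suc d0 \<le> dlast" using d0m sl by simp
        note X = later_iter[rule_format, OF dd0]
        show "is_HNF_of n (W (Suc d0)) H'" using X unfolding n_def H'_def by blast
        show "V' = filter nonzero_vec H'" using X unfolding V'_def H'_def by blast
        show "e \<le> length V'" using X unfolding V'_def e_def by blast
        show "\<forall>i<length V'. (\<forall>j<r+1. V'!i!j = 0) \<longleftrightarrow> e \<le> i" using X unfolding V'_def e_def by blast
      qed
      have dd1: "dmin \<le> Suc d0 \<and> Suc d0 \<le> dlast" using d0m sl by simp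
      have Wb: "is_zbasis n (W (Suc d0)) K" using kernel_basis[rule_format, OF dd1] unfolding n_def K_def by blast
      have Hlen: "\<forall>v\<in>set H'. length v = n" and HNF: "is_HNF n H'" and HK: "zspan n H' = K"
        using LI Wb by (auto simp: is_HNF_of_def is_HNF_def is_zbasis_def)
      have V'H: "set V' \<subseteq> set H'" using V'f by auto
      have Vlen: "\<forall>v\<in>set V'. length v = n" using V'H Hlen by auto
      have VK: "zspan n V' = K"
      proof
        have "zspan n V' \<subseteq> zspan n H'"
          by (intro zspan_mono ballI in_zspan_member) (use V'H Vlen in auto)
        then show "zspan n V' \<subseteq> K" using HK by simp
      next
        have "zspan n H' \<subseteq> zspan n V'"
        proof (intro zspan_mono ballI)
          fix w assume w: "w \<in> set H'"
          show "w \<in> zspan n V'"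
          proof (cases "nonzero_vec w")
            case True
            then have "w \<in> set V'" using w V'f by simp
            then show ?thesis using in_zspan_member Vlen by blast
          next
            case False
            then show ?thesis using w Hlen
              by (intro zero_in_zspan) (auto simp: nonzero_vec_def)
          qed
        qed
        then show "K \<subseteq> zspan n V'" using HK by simp
      qed
      have VinK: "\<forall>v\<in>set V'. v \<in> K" using VK in_zspan_member Vlen by blast
      have L0: "\<forall>v\<in>set (L d0). length v = n0 \<and> v \<in> K0"
        using Lb in_zspan_member unfolding is_zbasis_def by blast
      have PinK: "\<forall>v\<in>set P. v \<in> K"
        using L0 pad_kerZ unfolding P_def pad_def K_def K0_def n0_def by auto
      have V1inK: "\<forall>v\<in>set V1. v \<in> K" using VinK by (auto simp: V1_def dest: in_set_takeD)
      have Ilen: "\<forall>v\<in>set (P @ V1). length v = n"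
        using L0 Vlen nn by (auto simp: P_def pad_def V1_def dest: in_set_takeD)
      have span1: "zspan n (P @ V1) \<subseteq> K"
        using kerZ_closed[of "P@V1" a b N r "Suc d0"] PinK V1inK unfolding K_def n_def by auto
      have span2: "K \<subseteq> zspan n (P @ V1)"
      proof -
        have "\<forall>w\<in>set V'. w \<in> zspan n (P @ V1)"
        proof
          fix w assume w: "w \<in> set V'"
          then obtain i where i: "i < length V'" "V'!i = w" by (auto simp: in_set_conv_nth)
          show "w \<in> zspan n (P @ V1)"
          proof (cases "i < e")
            case True
            then have "V1!i = w" "i < length V1" using i el by (auto simp: V1_def)
            then have "w \<in> set V1" using nth_mem[of i V1] by simp
            then show ?thesis using in_zspan_member Ilen by auto
          next
            case False
            then have z: "\<forall>j<r+1. w!j = 0" using ez[rule_format, OF i(1)] i(2) by auto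
            have lw: "length w = n" using Vlen w by auto
            define y where "y = drop (r+1) w"
            have ly: "length y = n0" using lw nn by (simp add: y_def)
            have wy: "w = pad y"
              unfolding pad_def y_def by (rule nth_equalityI) (use lw nn z in \<open>auto simp: nth_append simp del: replicate_Suc\<close>)
            have "y \<in> K0" using pad_kerZ[OF ly[unfolded n0_def]] VinK w wy
              unfolding K_def K0_def pad_def by auto
            then have "y \<in> zspan n0 (L d0)" using Lb by (simp add: is_zbasis_def)
            then obtain c where c: "\<forall>j<n0. y!j = (\<Sum>k<length (L d0). c k * L d0!k!j)"
              unfolding zspan_iff by blast
            have "w \<in> zspan n P"
              unfolding zspan_iff
            proof (intro conjI exI allI impI)
              show "length w = n" by (fact lw)
              fix j assume j: "j < n"
              show "w!j = (\<Sum>k<length P. c k * P!k!j)"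
              proof (cases "j < r+1")
                case True then show ?thesis using z by (simp add: P_def pad_def nth_append del: replicate_Suc)
              next
                case False
                then have "w!j = y!(j-(r+1))" using wy by (simp add: pad_def nth_append del: replicate_Suc)
                also have "\<dots> = (\<Sum>k<length (L d0). c k * L d0!k!(j-(r+1)))" using c j nn False by simp
                also have "\<dots> = (\<Sum>k<length P. c k * P!k!j)" using False by (simp add: P_def pad_def nth_append del: replicate_Suc)
                finally show ?thesis .
              qed
            qed
            moreover have "zspan n P \<subseteq> zspan n (P @ V1)"
              by (intro zspan_mono ballI in_zspan_member) (use Ilen in auto)
            ultimately show ?thesis by blast
          qed
        qed
        then have "zspan n V' \<subseteq> zspan n (P @ V1)" by (rule zspan_mono)
        then show ?thesis using VK by simp
      qed
      have indep: "zindep n (P @ V1)"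
        unfolding zindep_def
      proof (intro allI impI)
        fix c k assume c0: "lincomb n c (P @ V1) = replicate n 0" and k: "k < length (P @ V1)"
        let ?m = "length P"
        have S: "\<forall>j<n. (\<Sum>i<?m. c i * P!i!j) + (\<Sum>i<length V1. c (?m+i) * V1!i!j) = 0"
        proof (intro allI impI)
          fix j assume "j < n"
          then have "(\<Sum>i<length (P@V1). c i * (P@V1)!i!j) = 0" using c0 lincomb_zero_iff by blast
          moreover have "(\<Sum>i<?m. c i * (P@V1)!i!j) = (\<Sum>i<?m. c i * P!i!j)"
            by (rule sum.cong) (auto simp: nth_append)
          ultimately show "(\<Sum>i<?m. c i * P!i!j) + (\<Sum>i<length V1. c (?m+i) * V1!i!j) = 0"
            by (simp add: sum_lessThan_add)
        qed
        have P0: "\<forall>i<?m. \<forall>j<r+1. P!i!j = 0" by (auto simp: P_def pad_def nth_append simp del: replicate_Suc)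
        have V1z: "\<forall>j<r+1. (\<Sum>i<length V1. c (?m+i) * V1!i!j) = 0"
        proof (intro allI impI)
          fix j assume j: "j < r+1"
          have "(\<Sum>i<?m. c i * P!i!j) = 0" by (rule sum.neutral) (use P0 j in auto)
          moreover have jn: "j < n" using j nn by simp
          ultimately show "(\<Sum>i<length V1. c (?m+i) * V1!i!j) = 0" using S[rule_format, OF jn] by simp
        qed
        have prefix: "\<forall>i j. i < j \<and> j < length H' \<and> nonzero_vec (H'!j) \<longrightarrow> nonzero_vec (H'!i)"
          using HNF unfolding is_HNF_def by blast
        have tw: "V' = takeWhile nonzero_vec H'" using filter_prefix[OF prefix] V'f by simp
        have VH: "\<forall>i<length V'. V'!i = H'!i" unfolding tw by (simp add: takeWhile_nth)
        have lVH: "length V' \<le> length H'" using tw by (simp add: length_takeWhile_le)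
        have lV1: "length V1 = e" using el by (simp add: V1_def)
        have V1V: "\<forall>i<e. V1!i = V'!i" by (simp add: V1_def)
        have piv: "\<forall>i<length V1. pivot (V1!i) < length (V1!i) \<and> V1!i!(pivot (V1!i)) \<noteq> 0 \<and> (\<forall>j<pivot (V1!i). V1!i!j = 0) \<and> pivot (V1!i) < r+1"
        proof (intro allI impI)
          fix i assume i: "i < length V1"
          then have iV: "i < length V'" "V1!i = V'!i" using lV1 el V1V by auto
          then obtain j where j: "j < r+1" "V'!i!j \<noteq> 0" using ez[rule_format, OF iV(1)] i lV1 by auto
          have "length (V'!i) = n" using Vlen iV nth_mem by blast
          then have "j < length (V'!i)" using j nn by simp
          from pivot_props[OF this j(2)]
          show "pivot (V1!i) < length (V1!i) \<and> V1!i!(pivot (V1!i)) \<noteq> 0 \<and> (\<forall>j<pivot (V1!i). V1!i!j = 0) \<and> pivot (V1!i) < r+1"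
            using iV j by auto
        qed
        have incr: "\<forall>i i'. i < i' \<and> i' < length V1 \<longrightarrow> pivot (V1!i) < pivot (V1!i')"
        proof (intro allI impI)
          fix i i' assume ii: "i < i' \<and> i' < length V1"
          then have i1: "i' < length V'" "i < length V'" using lV1 el by auto
          have "V'!i' \<in> set (filter nonzero_vec H')" using V'f nth_mem[OF i1(1)] by simp
          then have "nonzero_vec (V'!i')" by simp
          then have "nonzero_vec (H'!i')" using VH i1 by simp
          moreover have "i' < length H'" using i1 lVH by simp
          moreover have H2: "\<forall>i j. i < j \<and> j < length H' \<and> nonzero_vec (H'!j) \<longrightarrow>
               nonzero_vec (H'!i) \<and> pivot (H'!i) < pivot (H'!j)"
            using HNF unfolding is_HNF_def by blast
          ultimately have "pivot (H'!i) < pivot (H'!i')" using ii by blast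
          then show "pivot (V1!i) < pivot (V1!i')" using VH V1V i1 ii lV1 by auto
        qed
        have ce: "\<forall>i<length V1. c (length P + i) = 0"
          by (rule echelon_indep[where U=V1 and p="\<lambda>i. pivot (V1!i)" and q="r+1" and c="\<lambda>i. c (length P + i)"])
             (use piv in blast, use incr in blast, use piv in blast, use V1z in blast)
        have Pz: "\<forall>j<n. (\<Sum>i<?m. c i * P!i!j) = 0"
        proof (intro allI impI)
          fix j assume "j<n"
          have "(\<Sum>i<length V1. c (?m+i) * V1!i!j) = 0" using ce by simp
          then show "(\<Sum>i<?m. c i * P!i!j) = 0" using S[rule_format, OF \<open>j<n\<close>] by simp
        qed
        have "\<forall>j<n0. (\<Sum>i<length (L d0). c i * L d0!i!j) = 0"
        proof (intro allI impI)
          fix j assume j: "j < n0"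
          have "(\<Sum>i<length (L d0). c i * L d0!i!j) = (\<Sum>i<?m. c i * P!i!(r+1+j))"
            by (simp add: P_def pad_def nth_append del: replicate_Suc)
          then show "(\<Sum>i<length (L d0). c i * L d0!i!j) = 0" using Pz j nn by simp
        qed
        then have "lincomb n0 c (L d0) = replicate n0 0" using lincomb_zero_iff by blast
        then have Lc: "\<forall>i<length (L d0). c i = 0" using Lb by (simp add: is_zbasis_def zindep_def)
        show "c k = 0"
        proof (cases "k < ?m")
          case True then show ?thesis using Lc by (simp add: P_def)
        next
          case False then have "k - ?m < length V1" using k by simp
          then have "c (length P + (k - length P)) = 0" using ce by blast
          then show ?thesis using False by simp
        qed
      qed
      have "is_zbasis n (P @ V1) K" unfolding is_zbasis_def using Ilen indep span1 span2 by auto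
      then show "is_zbasis ((r+1)*(Suc d0+1)) (lll_input r dmin L V ell (Suc d0)) (kerZ a b N r (Suc d0))"
        using inp by (simp add: n_def K_def)
    qed
  qed
  then show "is_zbasis ((r+1)*(d+1)) (lll_input r dmin L V ell d) (kerZ a b N r d)" using dR by blast
qed

end
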